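(* Consider the online asynchronous testing setting with conflict sets described in the context. Suppose that the null $p$-values are super-uniform conditional on the non-conflicting information available at their decision time, i.e. for every $t\in\mathcal{H}^0$ and every $u\in[0,1]$, $\mathbb{P}(P_t\le u\mid \mathcal{F}^{-\mathcal{X}^{E_t}})\le u$. Then any LORD* procedure and any SAFFRON* procedure with target level $\alpha$ (where $\mathcal{F}$ denotes the LORD* filtration for LORD* and the SAFFRON* filtration for SAFFRON* ) guarantee $\mathrm{mFDR}(t)\le\alpha$ for all $t\in\mathbb{N}$.
   Context: Hypotheses $H_1,H_2,\dots$ are tested; the test of $H_t$ starts at step $t$, is run at a test level $\alpha_t\ge 0$ (and, for SAFFRON*-type procedures, uses a candidacy threshold $\lambda_t$ with $\alpha_t\le\lambda_t<1$), and produces a $p$-value $P_t$. $\mathcal{H}^0\subseteq\mathbb{N}$ is the fixed (unknown) set of indices of true null hypotheses. Each test $t$ has a fixed (deterministic) decision time $E_t\in\mathbb{N}$ with $E_t\ge t$. Let $R_t=\mathbf{1}\{P_t\le\alpha_t\}$ and $C_t=\mathbf{1}\{P_t\le\lambda_t\}$. Let $\{L_t\}$ be a fixed sequence of nonnegative integer lags with $L_{t+1}\le L_t+1$. The conflict set of test $t$ is $\mathcal{X}^t=\{i\in[t-1]:E_i\ge t\}\cup\big(\{t-L_t,\dots,t-1\}\cap[t-1]\big)$. The non-conflicting $\sigma$-algebras are $\mathcal{L}^{-\mathcal{X}^t}=\sigma(R_i: i\le t-1,\ i\notin\mathcal{X}^t)$ (LORD* filtration) and $\mathcal{S}^{-\mathcal{X}^t}=\sigma(R_i,C_i: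 i\le t-1,\ i\notin\mathcal{X}^t)$ (SAFFRON* filtration); $\mathcal{F}^{-\mathcal{X}^t}$ denotes the relevant one. The set of rejections by time $t$ is $\mathcal{R}(t)=\{i\in[t]: E_i\le t,\ P_i\le\alpha_i\}$ and $\mathcal{V}(t)=\mathcal{R}(t)\cap\mathcal{H}^0$; $\mathrm{mFDR}(t)=\mathbb{E}|\mathcal{V}(t)|/\mathbb{E}[|\mathcal{R}(t)|\vee 1]$. A LORD* procedure is any rule choosing each $\alpha_t\ge0$ to be $\mathcal{L}^{-\mathcal{X}^t}$-measurable such that, for all $t\in\mathbb{N}$, $\sum_{j\le t}\alpha_j\le \alpha\big((\sum_{j<t,\,j\notin\mathcal{X}^t}R_j)\vee1\big)$. A SAFFRON* procedure is any rule choosing $\alpha_t,\lambda_t$ (with $0\le\alpha_t\le\lambda_t<1$) to be $\mathcal{S}^{-\mathcal{X}^t}$-measurable such that, for all $t\in\mathbb{N}$, $\sum_{j<t,\,j\notin\mathcal{X}^t}\frac{\alpha_j}{1-\lambda_j}\mathbf{1}\{P_j>\lambda_j\}+\sum_{j\in\mathcal{X}^t\cup\{t\}}\frac{\alpha_j}{1-\lambda_j}\le\alpha\big((\sum_{j<t,\,j\notin\mathcal{X}^t}R_j)\vee1\big)$. *)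

theory Defs
  imports "HOL-Probability.Probability"
begin

text \<open>Online asynchronous testing with conflict sets. Tests are indexed by t = 1, 2, ...;
  index 0 is never used.\<close>

definition Rej :: "(nat \<Rightarrow> 'a \<Rightarrow> real) \<Rightarrow> (nat \<Rightarrow> 'a \<Rightarrow> real) \<Rightarrow> nat \<Rightarrow> 'a \<Rightarrow> real" where
  "Rej P al i \<omega> = (if P i \<omega> \<le> al i \<omega> then 1 else 0)"

definition Cand :: "(nat \<Rightarrow> 'a \<Rightarrow> real) \<Rightarrow> (nat \<Rightarrow> 'a \<Rightarrow> real) \<Rightarrow> nat \<Rightarrow> 'a \<Rightarrow> real" where
  "Cand P lam i \<omega> = (if P i \<omega> \<le> lam i \<omega> then 1 else 0)"

definition conflict :: "(nat \<Rightarrow> nat) \<Rightarrow> (nat \<Rightarrow> nat) \<Rightarrow> nat \<Rightarrow> nat set" where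
  "conflict E L t = {i. 1 \<le> i \<and> i \<le> t - 1 \<and> t \<le> E i}
                  \<union> ({i. t - L t \<le> i \<and> i \<le> t - 1} \<inter> {1..t - 1})"

definition nonconf :: "(nat \<Rightarrow> nat) \<Rightarrow> (nat \<Rightarrow> nat) \<Rightarrow> nat \<Rightarrow> nat set" where
  "nonconf E L t = {i. 1 \<le> i \<and> i \<le> t - 1 \<and> i \<notin> conflict E L t}"

definition gen_sigma :: "'a set \<Rightarrow> ('a \<Rightarrow> real) set \<Rightarrow> 'a measure" where
  "gen_sigma \<Omega> Fs = sigma \<Omega> {f -` A \<inter> \<Omega> | f A. f \<in> Fs \<and> A \<in> sets (borel :: real measure)}"

definition lord_filt :: "'a measure \<Rightarrow> (nat \<Rightarrow> 'a \<Rightarrow> real) \<Rightarrow> (nat \<Rightarrow> 'a \<Rightarrow> real)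
    \<Rightarrow> (nat \<Rightarrow> nat) \<Rightarrow> (nat \<Rightarrow> nat) \<Rightarrow> nat \<Rightarrow> 'a measure" where
  "lord_filt M P al E L t = gen_sigma (space M) ((\<lambda>i. Rej P al i) ` nonconf E L t)"

definition saffron_filt :: "'a measure \<Rightarrow> (nat \<Rightarrow> 'a \<Rightarrow> real) \<Rightarrow> (nat \<Rightarrow> 'a \<Rightarrow> real)
    \<Rightarrow> (nat \<Rightarrow> 'a \<Rightarrow> real) \<Rightarrow> (nat \<Rightarrow> nat) \<Rightarrow> (nat \<Rightarrow> nat) \<Rightarrow> nat \<Rightarrow> 'a measure" where
  "saffron_filt M P al lam E L t = gen_sigma (space M)
      ((\<lambda>i. Rej P al i) ` nonconf E L t \<union> (\<lambda>i. Cand P lam i) ` nonconf E L t)"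

definition is_LORD_star :: "'a measure \<Rightarrow> real \<Rightarrow> (nat \<Rightarrow> 'a \<Rightarrow> real) \<Rightarrow> (nat \<Rightarrow> 'a \<Rightarrow> real)
    \<Rightarrow> (nat \<Rightarrow> nat) \<Rightarrow> (nat \<Rightarrow> nat) \<Rightarrow> bool" where
  "is_LORD_star M a P al E L \<longleftrightarrow>
     (\<forall>t\<ge>1. al t \<in> borel_measurable (lord_filt M P al E L t)
         \<and> (\<forall>\<omega>\<in>space M. 0 \<le> al t \<omega>
             \<and> (\<Sum>j=1..t. al j \<omega>) \<le> a * max (\<Sum>j\<in>nonconf E L t. Rej P al j \<omega>) 1))"

definition is_SAFFRON_star :: "'a measure \<Rightarrow> real \<Rightarrow> (nat \<Rightarrow> 'a \<Rightarrow> real) \<Rightarrow> (nat \<Rightarrow> 'a \<Rightarrow> real)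
    \<Rightarrow> (nat \<Rightarrow> 'a \<Rightarrow> real) \<Rightarrow> (nat \<Rightarrow> nat) \<Rightarrow> (nat \<Rightarrow> nat) \<Rightarrow> bool" where
  "is_SAFFRON_star M a P al lam E L \<longleftrightarrow>
     (\<forall>t\<ge>1. al t \<in> borel_measurable (saffron_filt M P al lam E L t)
         \<and> lam t \<in> borel_measurable (saffron_filt M P al lam E L t)
         \<and> (\<forall>\<omega>\<in>space M. 0 \<le> al t \<omega> \<and> al t \<omega> \<le> lam t \<omega> \<and> lam t \<omega> < 1
             \<and> (\<Sum>j\<in>nonconf E L t. al j \<omega> / (1 - lam j \<omega>) * (if P j \<omega> > lam j \<omega> then 1 else 0))
               + (\<Sum>j\<in>conflict E L t \<union> {t}. al j \<omega> / (1 - lam j \<omega>))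
               \<le> a * max (\<Sum>j\<in>nonconf E L t. Rej P al j \<omega>) 1))"

definition rejset :: "(nat \<Rightarrow> 'a \<Rightarrow> real) \<Rightarrow> (nat \<Rightarrow> 'a \<Rightarrow> real) \<Rightarrow> (nat \<Rightarrow> nat) \<Rightarrow> nat \<Rightarrow> 'a \<Rightarrow> nat set" where
  "rejset P al E t \<omega> = {i \<in> {1..t}. E i \<le> t \<and> P i \<omega> \<le> al i \<omega>}"

definition mFDR :: "'a measure \<Rightarrow> nat set \<Rightarrow> (nat \<Rightarrow> 'a \<Rightarrow> real) \<Rightarrow> (nat \<Rightarrow> 'a \<Rightarrow> real)
    \<Rightarrow> (nat \<Rightarrow> nat) \<Rightarrow> nat \<Rightarrow> real" where
  "mFDR M H0 P al E t =
     (\<integral>\<omega>. real (card (rejset P al E t \<omega> \<inter> H0)) \<partial>M)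
     / (\<integral>\<omega>. max (real (card (rejset P al E t \<omega>))) 1 \<partial>M)"

definition cond_superuniform :: "'a measure \<Rightarrow> nat set \<Rightarrow> (nat \<Rightarrow> 'a \<Rightarrow> real)
    \<Rightarrow> (nat \<Rightarrow> nat) \<Rightarrow> (nat \<Rightarrow> 'a measure) \<Rightarrow> bool" where
  "cond_superuniform M H0 P E F \<longleftrightarrow>
     (\<forall>t\<in>H0. t \<ge> 1 \<longrightarrow> (\<forall>u\<in>{0..1::real}.
        AE \<omega> in M. real_cond_exp M (F (E t)) (indicator {x \<in> space M. P t x \<le> u}) \<omega> \<le> u))"

end

theory Submission
  imports Defs
begin


lemma sfs_of:
  assumes "prob_space M" "subalgebra M F"
  shows "sigma_finite_subalgebra M F"
proof -
  interpret prob_space M by fact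
  have "finite_measure_subalgebra M F"
    unfolding finite_measure_subalgebra_def finite_measure_subalgebra_axioms_def
    using assms(2) finite_measure_axioms by blast
  then show ?thesis by (rule finite_measure_subalgebra_is_sigma_finite)
qed

lemma step_bound:
  assumes PS: "prob_space M" and SA: "subalgebra M F" and X: "X \<in> borel_measurable M"
    and SU: "\<And>u. u \<in> {0..1} \<Longrightarrow> AE \<omega> in M. real_cond_exp M F (indicator {x\<in>space M. X x \<le> u}) \<omega> \<le> u"
    and f: "f \<in> borel_measurable F" and fb: "\<And>\<omega>. \<omega> \<in> space M \<Longrightarrow> 0 \<le> f \<omega> \<and> f \<omega> \<le> B"
    and u: "0 \<le> u"
  shows "(\<integral>\<omega>. f \<omega> * indicator {x\<in>space M. X x \<le> u} \<omega> \<partial>M) \<le> (\<integral>\<omega>. f \<omega> * u \<partial>M)"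
proof -
  interpret prob_space M by fact
  interpret sigma_finite_subalgebra M F using sfs_of[OF PS SA] .
  have fM[measurable]: "f \<in> borel_measurable M" using measurable_from_subalg[OF SA f] .
  have XM[measurable]: "X \<in> borel_measurable M" by fact
  have setM: "{x\<in>space M. X x \<le> u} \<in> sets M" by measurable
  have int1: "integrable M (\<lambda>\<omega>. f \<omega> * indicator {x\<in>space M. X x \<le> u} \<omega>)"
  proof (rule integrable_const_bound[where B=B])
    show "AE x in M. norm (f x * indicator {x\<in>space M. X x \<le> u} x) \<le> B"
      using AE_space by eventually_elim (use fb in \<open>fastforce simp: indicator_def abs_mult\<close>)
  qed (use setM in measurable)
  have intf: "integrable M f"
  proof (rule integrable_const_bound[where B=B])
    show "AE x in M. norm (f x) \<le> B"
      using AE_space by eventually_elim (use fb in \<open>fastforce\<close>)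
  qed simp
  have int2: "integrable M (\<lambda>\<omega>. f \<omega> * u)" using intf by simp
  show ?thesis
  proof (cases "u \<le> 1")
    case True
    have indM: "indicator {x\<in>space M. X x \<le> u} \<in> borel_measurable M" using setM by simp
    note ce = real_cond_exp_intg[OF int1 f indM]
    have "(\<integral>\<omega>. f \<omega> * indicator {x\<in>space M. X x \<le> u} \<omega> \<partial>M)
        = (\<integral>\<omega>. f \<omega> * real_cond_exp M F (indicator {x\<in>space M. X x \<le> u}) \<omega> \<partial>M)"
      using ce(2) by simp
    also have "\<dots> \<le> (\<integral>\<omega>. f \<omega> * u \<partial>M)"
    proof (rule integral_mono_AE[OF ce(1) int2])
      show "AE \<omega> in M. f \<omega> * real_cond_exp M F (indicator {x\<in>space M. X x \<le> u}) \<omega> \<le> f \<omega> * u"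
      proof -
        have "AE \<omega> in M. real_cond_exp M F (indicator {x\<in>space M. X x \<le> u}) \<omega> \<le> u"
          using SU True u by auto
        then show ?thesis using AE_space
        by eventually_elim (use fb in \<open>auto intro: mult_left_mono\<close>)
      qed
    qed
    finally show ?thesis .
  next
    case False
    show ?thesis
    proof (rule integral_mono[OF int1 int2])
      fix x assume x: "x \<in> space M"
      have "f x * 1 \<le> f x * u" using fb[OF x] False by (intro mult_left_mono) auto
      then show "f x * indicator {x\<in>space M. X x \<le> u} x \<le> f x * u"
        using fb[OF x] by (auto simp: indicator_def)
    qed
  qed
qed

lemma int_bdd:
  fixes B :: real
  assumes "prob_space M" "f \<in> borel_measurable M" "\<And>\<omega>. \<omega> \<in> space M \<Longrightarrow> \<bar>f \<omega>\<bar> \<le> B"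
  shows "integrable M f"
proof -
  interpret prob_space M by fact
  show ?thesis
  proof (rule integrable_const_bound[where B=B])
    show "AE x in M. norm (f x) \<le> B"
      using AE_space by eventually_elim (use assms(3) in \<open>auto\<close>)
  qed fact
qed

lemma sum_pick:
  assumes "finite S" "x \<in> S"
  shows "(\<Sum>j\<in>S. (if x = j then a else (0::real)) * f j) = a * f x"
proof -
  have "(\<Sum>j\<in>S. (if x = j then a else 0) * f j) = (\<Sum>j\<in>S. if x = j then a * f j else 0)"
    by (rule sum.cong) auto
  also have "\<dots> = a * f x" using assms by simp
  finally show ?thesis .
qed

lemma key_bound:
  fixes B C :: real
  assumes PS: "prob_space M" and SA: "subalgebra M F" and X: "X \<in> borel_measurable M"
    and SU: "\<And>u. u \<in> {0..1} \<Longrightarrow> AE \<omega> in M. real_cond_exp M F (indicator {x\<in>space M. X x \<le> u}) \<omega> \<le> u"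
    and g: "g \<in> borel_measurable F" and gb: "\<And>\<omega>. \<omega> \<in> space M \<Longrightarrow> 0 \<le> g \<omega> \<and> g \<omega> \<le> B"
    and h: "h \<in> borel_measurable F" and hb: "\<And>\<omega>. \<omega> \<in> space M \<Longrightarrow> 0 \<le> h \<omega> \<and> h \<omega> \<le> C"
  shows "(\<integral>\<omega>. g \<omega> * indicator {x\<in>space M. X x \<le> h x} \<omega> \<partial>M) \<le> (\<integral>\<omega>. g \<omega> * h \<omega> \<partial>M)"
proof (rule field_le_epsilon)
  interpret prob_space M by fact
  fix e :: real assume e: "0 < e"
  obtain n :: nat where n: "max (B / e) 1 < real n" using reals_Archimedean2 by blast
  have npos: "0 < real n" using n by linarith
  have Bn: "B / real n \<le> e"
  proof -
    have "B / e < real n" using n by linarith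
    then have "B < real n * e" using e by (simp add: field_simps)
    then show ?thesis using npos by (simp add: field_simps)
  qed
  have [measurable]: "g \<in> borel_measurable F" "h \<in> borel_measurable F" by fact+
  have gM[measurable]: "g \<in> borel_measurable M" using measurable_from_subalg[OF SA g] .
  have hM[measurable]: "h \<in> borel_measurable M" using measurable_from_subalg[OF SA h] .
  have XM[measurable]: "X \<in> borel_measurable M" by fact
  have spF: "space F = space M" using SA by (simp add: subalgebra_def)
  have B0: "0 \<le> B" using gb not_empty by (metis order_trans all_not_in_conv)
  define k where "k = (\<lambda>\<omega>. nat \<lceil>real n * h \<omega>\<rceil>)"
  define N where "N = nat \<lceil>real n * C\<rceil>"
  have kF[measurable]: "k \<in> measurable F (count_space UNIV)" unfolding k_def by measurable
  have kM[measurable]: "k \<in> measurable M (count_space UNIV)" unfolding k_def by measurable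
  have kN: "k \<omega> \<in> {0..N}" if "\<omega> \<in> space M" for \<omega>
  proof -
    have "real n * h \<omega> \<le> real n * C" using hb[OF that] npos by (intro mult_left_mono) auto
    then have "\<lceil>real n * h \<omega>\<rceil> \<le> \<lceil>real n * C\<rceil>" by (rule ceiling_mono)
    then have "nat \<lceil>real n * h \<omega>\<rceil> \<le> nat \<lceil>real n * C\<rceil>" by (rule nat_mono)
    then show ?thesis unfolding k_def N_def atLeastAtMost_iff by simp
  qed
  have hk: "h \<omega> \<le> real (k \<omega>) / real n" "real (k \<omega>) / real n \<le> h \<omega> + 1 / real n"
    if "\<omega> \<in> space M" for \<omega>
  proof -
    have h0: "0 \<le> real n * h \<omega>" using hb[OF that] npos by simp
    have rk: "real (k \<omega>) = of_int \<lceil>real n * h \<omega>\<rceil>" unfolding k_def using h0 by simp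
    have "real n * h \<omega> \<le> real (k \<omega>)" unfolding rk by (rule le_of_int_ceiling)
    then show "h \<omega> \<le> real (k \<omega>) / real n" using npos by (simp add: field_simps)
    have "real (k \<omega>) \<le> real n * h \<omega> + 1" unfolding rk by linarith
    then show "real (k \<omega>) / real n \<le> h \<omega> + 1 / real n" using npos by (simp add: field_simps)
  qed
  define fj where "fj = (\<lambda>j \<omega>. if k \<omega> = j then g \<omega> else 0)"
  have fjF: "fj j \<in> borel_measurable F" for j unfolding fj_def by measurable
  have fjM[measurable]: "fj j \<in> borel_measurable M" for j unfolding fj_def by measurable
  have fjb: "0 \<le> fj j \<omega> \<and> fj j \<omega> \<le> B" if "\<omega> \<in> space M" for j \<omega>
    using gb[OF that] by (auto simp: fj_def)
  have setM[measurable]: "{x\<in>space M. X x \<le> u} \<in> sets M" for u by measurable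
  have setM2: "{x\<in>space M. X x \<le> h x} \<in> sets M" by measurable
  have intgh: "integrable M (\<lambda>\<omega>. g \<omega> * h \<omega>)"
    by (rule int_bdd[OF PS, where B="B * C"]) (use gb hb B0 in \<open>auto simp: abs_mult intro!: mult_mono\<close>)
  have intj: "integrable M (\<lambda>\<omega>. fj j \<omega> * indicator {x\<in>space M. X x \<le> real j / real n} \<omega>)" for j
  proof (rule int_bdd[OF PS, where B=B])
    fix \<omega> assume "\<omega> \<in> space M"
    then show "\<bar>fj j \<omega> * indicator {x\<in>space M. X x \<le> real j / real n} \<omega>\<bar> \<le> B"
      using fjb[of \<omega> j] B0 by (auto simp: indicator_def)
  qed measurable
  have "(\<integral>\<omega>. g \<omega> * indicator {x\<in>space M. X x \<le> h x} \<omega> \<partial>M)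
      \<le> (\<integral>\<omega>. (\<Sum>j\<in>{0..N}. fj j \<omega> * indicator {x\<in>space M. X x \<le> real j / real n} \<omega>) \<partial>M)"
  proof (rule integral_mono)
    show "integrable M (\<lambda>\<omega>. g \<omega> * indicator {x\<in>space M. X x \<le> h x} \<omega>)"
      by (rule int_bdd[OF PS, where B=B]) (use setM2 gb B0 in \<open>auto simp: indicator_def\<close>)
    show "integrable M (\<lambda>\<omega>. (\<Sum>j\<in>{0..N}. fj j \<omega> * indicator {x\<in>space M. X x \<le> real j / real n} \<omega>))"
      using intj by (rule Bochner_Integration.integrable_sum)
    fix \<omega> assume w: "\<omega> \<in> space M"
    have "(\<Sum>j\<in>{0..N}. fj j \<omega> * indicator {x\<in>space M. X x \<le> real j / real n} \<omega>)
        = g \<omega> * indicator {x\<in>space M. X x \<le> real (k \<omega>) / real n} \<omega>"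
      unfolding fj_def using kN[OF w] by (intro sum_pick) auto
    moreover have "g \<omega> * indicator {x\<in>space M. X x \<le> h x} \<omega> \<le> g \<omega> * indicator {x\<in>space M. X x \<le> real (k \<omega>) / real n} \<omega>"
      using gb[OF w] hk(1)[OF w] w by (auto simp: indicator_def)
    ultimately show "g \<omega> * indicator {x\<in>space M. X x \<le> h x} \<omega>
        \<le> (\<Sum>j\<in>{0..N}. fj j \<omega> * indicator {x\<in>space M. X x \<le> real j / real n} \<omega>)" by simp
  qed
  also have "\<dots> = (\<Sum>j\<in>{0..N}. (\<integral>\<omega>. fj j \<omega> * indicator {x\<in>space M. X x \<le> real j / real n} \<omega> \<partial>M))"
    using intj by (rule Bochner_Integration.integral_sum)
  also have "\<dots> \<le> (\<Sum>j\<in>{0..N}. (\<integral>\<omega>. fj j \<omega> * (real j / real n) \<partial>M))"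
    by (intro sum_mono step_bound[OF PS SA X SU fjF fjb]) auto
  also have "\<dots> = (\<integral>\<omega>. (\<Sum>j\<in>{0..N}. fj j \<omega> * (real j / real n)) \<partial>M)"
  proof (rule Bochner_Integration.integral_sum[symmetric])
    fix j
    have "integrable M (fj j)"
      by (rule int_bdd[OF PS, where B=B]) (use fjb in auto)
    then show "integrable M (\<lambda>\<omega>. fj j \<omega> * (real j / real n))" by simp
  qed
  also have "\<dots> = (\<integral>\<omega>. g \<omega> * (real (k \<omega>) / real n) \<partial>M)"
  proof (rule Bochner_Integration.integral_cong[OF refl])
    fix \<omega> assume w: "\<omega> \<in> space M"
    show "(\<Sum>j\<in>{0..N}. fj j \<omega> * (real j / real n)) = g \<omega> * (real (k \<omega>) / real n)"
      unfolding fj_def using kN[OF w] by (intro sum_pick) auto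
  qed
  also have "\<dots> \<le> (\<integral>\<omega>. g \<omega> * h \<omega> + B / real n \<partial>M)"
  proof (rule integral_mono)
    show "integrable M (\<lambda>\<omega>. g \<omega> * (real (k \<omega>) / real n))"
      by (rule int_bdd[OF PS, where B="B * (real N / real n)"]) (use gb kN npos B0 in \<open>auto simp: abs_mult intro!: mult_mono divide_right_mono\<close>)
    show "integrable M (\<lambda>\<omega>. g \<omega> * h \<omega> + B / real n)"
      using intgh by simp
    fix \<omega> assume w: "\<omega> \<in> space M"
    have "g \<omega> * (real (k \<omega>) / real n) \<le> g \<omega> * (h \<omega> + 1 / real n)"
      using gb[OF w] hk(2)[OF w] by (intro mult_left_mono) auto
    also have "\<dots> \<le> g \<omega> * h \<omega> + B / real n"
      using gb[OF w] npos by (simp add: algebra_simps divide_right_mono)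
    finally show "g \<omega> * (real (k \<omega>) / real n) \<le> g \<omega> * h \<omega> + B / real n" .
  qed
  also have "\<dots> = (\<integral>\<omega>. g \<omega> * h \<omega> \<partial>M) + B / real n"
  proof -
    have "(\<integral>\<omega>. g \<omega> * h \<omega> + B / real n \<partial>M) = (\<integral>\<omega>. g \<omega> * h \<omega> \<partial>M) + (\<integral>\<omega>. B / real n \<partial>M)"
      by (rule Bochner_Integration.integral_add[OF intgh]) simp
    also have "(\<integral>\<omega>. B / real n \<partial>M) = B / real n" by (simp add: prob_space)
    finally show ?thesis .
  qed
  also have "\<dots> \<le> (\<integral>\<omega>. g \<omega> * h \<omega> \<partial>M) + e" using Bn by simp
  finally show "(\<integral>\<omega>. g \<omega> * indicator {x\<in>space M. X x \<le> h x} \<omega> \<partial>M) \<le> (\<integral>\<omega>. g \<omega> * h \<omega> \<partial>M) + e" .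
qed



lemma gen_sigma_space: "space (gen_sigma \<Omega> Fs) = \<Omega>"
  unfolding gen_sigma_def by (simp add: space_measure_of_conv)

lemma gen_sigma_sets: "sets (gen_sigma \<Omega> Fs) = sigma_sets \<Omega> {f -` A \<inter> \<Omega> | f A. f \<in> Fs \<and> A \<in> sets (borel :: real measure)}"
  unfolding gen_sigma_def by (subst sets_measure_of) auto

lemma gen_sigma_meas: "f \<in> Fs \<Longrightarrow> f \<in> borel_measurable (gen_sigma \<Omega> Fs)"
  by (rule measurableI) (auto simp: gen_sigma_space gen_sigma_sets)

lemma gen_sigma_mono: "Fs \<subseteq> Gs \<Longrightarrow> subalgebra (gen_sigma \<Omega> Gs) (gen_sigma \<Omega> Fs)"
  unfolding subalgebra_def gen_sigma_space gen_sigma_sets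
  by (intro conjI refl sigma_sets_mono') blast

lemma gen_sigma_sub:
  assumes "\<And>f. f \<in> Fs \<Longrightarrow> f \<in> borel_measurable M"
  shows "subalgebra M (gen_sigma (space M) Fs)"
  unfolding subalgebra_def gen_sigma_space gen_sigma_sets
proof (intro conjI refl sets.sigma_sets_subset)
  show "{f -` A \<inter> space M |f A. f \<in> Fs \<and> A \<in> sets borel} \<subseteq> sets M"
    using assms measurable_sets by blast
qed

lemma nonconf_sub: "nonconf E L t \<subseteq> {1..t-1}"
  unfolding nonconf_def by auto

lemma finite_nonconf: "finite (nonconf E L t)"
  using finite_subset[OF nonconf_sub] by blast

lemma lagmono:
  assumes "\<And>t. t \<ge> 1 \<Longrightarrow> L (Suc t) \<le> L t + 1" "1 \<le> i" "i \<le> j"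
  shows "i - L i \<le> j - L j"
  using assms(3,2)
proof (induction j rule: dec_induct)
  case base then show ?case by simp
next
  case (step n)
  have "L (Suc n) \<le> L n + 1" using assms(1) step by auto
  then have "n - L n \<le> Suc n - L (Suc n)" by linarith
  then show ?case using step by linarith
qed

lemma nonconf_mono:
  assumes "\<And>t. t \<ge> 1 \<Longrightarrow> L (Suc t) \<le> L t + 1" "1 \<le> i" "i \<le> j"
  shows "nonconf E L i \<subseteq> nonconf E L j"
proof
  fix m assume m: "m \<in> nonconf E L i"
  have lm: "i - L i \<le> j - L j" using lagmono[of L i j] assms by blast
  from m show "m \<in> nonconf E L j"
    unfolding nonconf_def conflict_def using assms(3) lm by auto
qed

lemma Rej_fun: "Rej P al i = (\<lambda>\<omega>. if P i \<omega> \<le> al i \<omega> then 1 else 0)"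
  by (rule ext) (simp add: Rej_def)

lemma Cand_fun: "Cand P lam i = (\<lambda>\<omega>. if P i \<omega> \<le> lam i \<omega> then 1 else 0)"
  by (rule ext) (simp add: Cand_def)

lemma Rej_meas: "P i \<in> borel_measurable M \<Longrightarrow> al i \<in> borel_measurable M \<Longrightarrow> Rej P al i \<in> borel_measurable M"
  unfolding Rej_fun by measurable

lemma Cand_meas: "P i \<in> borel_measurable M \<Longrightarrow> lam i \<in> borel_measurable M \<Longrightarrow> Cand P lam i \<in> borel_measurable M"
  unfolding Cand_fun by measurable

lemma lord_meas:
  assumes LS: "is_LORD_star M a P al E L" and PM: "\<And>t. P t \<in> borel_measurable M"
  shows "1 \<le> t \<Longrightarrow> al t \<in> borel_measurable M"
proof (induction t rule: less_induct)
  case (less t)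
  have "subalgebra M (lord_filt M P al E L t)"
    unfolding lord_filt_def
  proof (rule gen_sigma_sub)
    fix f assume "f \<in> (\<lambda>i. Rej P al i) ` nonconf E L t"
    then obtain j where j: "j \<in> nonconf E L t" "f = Rej P al j" by blast
    have "1 \<le> j" "j < t" using j(1) less.prems unfolding nonconf_def by auto
    then show "f \<in> borel_measurable M" using j(2) Rej_meas[OF PM less.IH] by simp
  qed
  moreover have "al t \<in> borel_measurable (lord_filt M P al E L t)"
    using LS less.prems unfolding is_LORD_star_def by blast
  ultimately show ?case by (rule measurable_from_subalg)
qed

lemma lord_sub:
  assumes LS: "is_LORD_star M a P al E L" and PM: "\<And>t. P t \<in> borel_measurable M"
  shows "subalgebra M (lord_filt M P al E L t)"
  unfolding lord_filt_def
proof (rule gen_sigma_sub)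
  fix f assume "f \<in> (\<lambda>i. Rej P al i) ` nonconf E L t"
  then obtain j where j: "j \<in> nonconf E L t" "f = Rej P al j" by blast
  have "1 \<le> j" using j(1) unfolding nonconf_def by auto
  then show "f \<in> borel_measurable M" using j(2) Rej_meas[OF PM lord_meas[OF LS PM]] by simp
qed

lemma saff_meas:
  assumes LS: "is_SAFFRON_star M a P al lam E L" and PM: "\<And>t. P t \<in> borel_measurable M"
  shows "1 \<le> t \<Longrightarrow> al t \<in> borel_measurable M \<and> lam t \<in> borel_measurable M"
proof (induction t rule: less_induct)
  case (less t)
  have "subalgebra M (saffron_filt M P al lam E L t)"
    unfolding saffron_filt_def
  proof (rule gen_sigma_sub)
    fix f assume "f \<in> (\<lambda>i. Rej P al i) ` nonconf E L t \<union> (\<lambda>i. Cand P lam i) ` nonconf E L t"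
    then obtain j where j: "j \<in> nonconf E L t" "f = Rej P al j \<or> f = Cand P lam j" by blast
    have "1 \<le> j" "j < t" using j(1) less.prems unfolding nonconf_def by auto
    then show "f \<in> borel_measurable M" using j(2) Rej_meas[where i=j and al=al, OF PM] Cand_meas[where i=j and lam=lam, OF PM] less.IH[of j] by auto
  qed
  moreover have "al t \<in> borel_measurable (saffron_filt M P al lam E L t)"
      "lam t \<in> borel_measurable (saffron_filt M P al lam E L t)"
    using LS less.prems unfolding is_SAFFRON_star_def by blast+
  ultimately show ?case using measurable_from_subalg by blast
qed

lemma saff_sub:
  assumes LS: "is_SAFFRON_star M a P al lam E L" and PM: "\<And>t. P t \<in> borel_measurable M"
  shows "subalgebra M (saffron_filt M P al lam E L t)"
  unfolding saffron_filt_def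
proof (rule gen_sigma_sub)
  fix f assume "f \<in> (\<lambda>i. Rej P al i) ` nonconf E L t \<union> (\<lambda>i. Cand P lam i) ` nonconf E L t"
  then obtain j where j: "j \<in> nonconf E L t" "f = Rej P al j \<or> f = Cand P lam j" by blast
  have "1 \<le> j" using j(1) unfolding nonconf_def by auto
  then show "f \<in> borel_measurable M" using j(2) Rej_meas[where i=j and al=al, OF PM] Cand_meas[where i=j and lam=lam, OF PM] saff_meas[OF LS PM, of j] by auto
qed

lemma lord_filt_mono:
  assumes "\<And>t. t \<ge> 1 \<Longrightarrow> L (Suc t) \<le> L t + 1" "1 \<le> i" "i \<le> j"
  shows "subalgebra (lord_filt M P al E L j) (lord_filt M P al E L i)"
  unfolding lord_filt_def using nonconf_mono[of L i j E, OF assms] by (intro gen_sigma_mono) blast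

lemma saff_filt_mono:
  assumes "\<And>t. t \<ge> 1 \<Longrightarrow> L (Suc t) \<le> L t + 1" "1 \<le> i" "i \<le> j"
  shows "subalgebra (saffron_filt M P al lam E L j) (saffron_filt M P al lam E L i)"
  unfolding saffron_filt_def using nonconf_mono[of L i j E, OF assms] by (intro gen_sigma_mono) blast



lemma null_L:
  fixes C :: real
  assumes PS: "prob_space M" and SA: "subalgebra M F" and X: "X \<in> borel_measurable M"
    and SU: "\<And>u. u \<in> {0..1} \<Longrightarrow> AE \<omega> in M. real_cond_exp M F (indicator {x\<in>space M. X x \<le> u}) \<omega> \<le> u"
    and h: "h \<in> borel_measurable F" and hb: "\<And>\<omega>. \<omega> \<in> space M \<Longrightarrow> 0 \<le> h \<omega> \<and> h \<omega> \<le> C"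
  shows "(\<integral>\<omega>. (if X \<omega> \<le> h \<omega> then 1 else 0::real) \<partial>M) \<le> (\<integral>\<omega>. h \<omega> \<partial>M)"
proof -
  have "(\<integral>\<omega>. (if X \<omega> \<le> h \<omega> then 1 else 0::real) \<partial>M) = (\<integral>\<omega>. 1 * indicator {x\<in>space M. X x \<le> h x} \<omega> \<partial>M)"
    by (rule Bochner_Integration.integral_cong) (auto simp: indicator_def)
  also have "\<dots> \<le> (\<integral>\<omega>. 1 * h \<omega> \<partial>M)"
    by (rule key_bound[OF PS SA X SU _ _ h hb, where B=1]) auto
  finally show ?thesis by simp
qed

lemma null_S:
  fixes B :: real
  assumes PS: "prob_space M" and SA: "subalgebra M F" and X: "X \<in> borel_measurable M"
    and SU: "\<And>u. u \<in> {0..1} \<Longrightarrow> AE \<omega> in M. real_cond_exp M F (indicator {x\<in>space M. X x \<le> u}) \<omega> \<le> u"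
    and al: "al \<in> borel_measurable F" and lam: "lam \<in> borel_measurable F"
    and b: "\<And>\<omega>. \<omega> \<in> space M \<Longrightarrow> 0 \<le> al \<omega> \<and> al \<omega> \<le> lam \<omega> \<and> lam \<omega> < 1 \<and> al \<omega> / (1 - lam \<omega>) \<le> B"
  shows "(\<integral>\<omega>. (if X \<omega> \<le> al \<omega> then 1 else 0::real) \<partial>M)
     \<le> (\<integral>\<omega>. al \<omega> / (1 - lam \<omega>) * (if lam \<omega> < X \<omega> then 1 else 0) \<partial>M)"
proof -
  interpret prob_space M by fact
  have [measurable]: "al \<in> borel_measurable F" "lam \<in> borel_measurable F" by fact+
  have alM[measurable]: "al \<in> borel_measurable M" using measurable_from_subalg[OF SA al] .
  have lamM[measurable]: "lam \<in> borel_measurable M" using measurable_from_subalg[OF SA lam] .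
  have XM[measurable]: "X \<in> borel_measurable M" by fact
  define g where "g = (\<lambda>\<omega>. al \<omega> / (1 - lam \<omega>))"
  have gF: "g \<in> borel_measurable F" unfolding g_def by measurable
  have gM[measurable]: "g \<in> borel_measurable M" unfolding g_def by measurable
  have gb: "0 \<le> g \<omega> \<and> g \<omega> \<le> B" if "\<omega> \<in> space M" for \<omega>
    using b[OF that] unfolding g_def by auto
  have lb: "0 \<le> lam \<omega> \<and> lam \<omega> \<le> 1" if "\<omega> \<in> space M" for \<omega> using b[OF that] by auto
  have B0: "0 \<le> B" using gb not_empty by (metis order_trans all_not_in_conv)
  have intg: "integrable M g" by (rule int_bdd[OF PS, where B=B]) (use gb in auto)
  have intgl: "integrable M (\<lambda>\<omega>. g \<omega> * lam \<omega>)"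
  proof (rule int_bdd[OF PS, where B=B])
    fix \<omega> assume w: "\<omega> \<in> space M"
    have "g \<omega> * lam \<omega> \<le> g \<omega> * 1" using gb[OF w] lb[OF w] by (intro mult_left_mono) auto
    then show "\<bar>g \<omega> * lam \<omega>\<bar> \<le> B" using gb[OF w] lb[OF w] by (simp add: abs_mult)
  qed measurable
  have intgi: "integrable M (\<lambda>\<omega>. g \<omega> * indicator {x\<in>space M. X x \<le> lam x} \<omega>)"
    by (rule int_bdd[OF PS, where B=B]) (use gb B0 in \<open>auto simp: indicator_def\<close>)
  have "(\<integral>\<omega>. (if X \<omega> \<le> al \<omega> then 1 else 0::real) \<partial>M) \<le> (\<integral>\<omega>. al \<omega> \<partial>M)"
  proof (rule null_L[OF PS SA X SU al, where C=1])
    fix \<omega> assume "\<omega> \<in> space M"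
    from b[OF this] show "0 \<le> al \<omega> \<and> al \<omega> \<le> 1" by linarith
  qed
  also have "\<dots> = (\<integral>\<omega>. g \<omega> - g \<omega> * lam \<omega> \<partial>M)"
  proof (rule Bochner_Integration.integral_cong[OF refl])
    fix x assume "x \<in> space M"
    then have "1 - lam x \<noteq> 0" using b by force
    moreover have "g x - g x * lam x = al x / (1 - lam x) * (1 - lam x)" unfolding g_def by (simp only: right_diff_distrib mult_1_right)
    ultimately show "al x = g x - g x * lam x" by simp
  qed
  also have "\<dots> = (\<integral>\<omega>. g \<omega> \<partial>M) - (\<integral>\<omega>. g \<omega> * lam \<omega> \<partial>M)"
    by (rule Bochner_Integration.integral_diff[OF intg intgl])
  also have "\<dots> \<le> (\<integral>\<omega>. g \<omega> \<partial>M) - (\<integral>\<omega>. g \<omega> * indicator {x\<in>space M. X x \<le> lam x} \<omega> \<partial>M)"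
    using key_bound[OF PS SA X SU gF gb lam lb] by simp
  also have "\<dots> = (\<integral>\<omega>. g \<omega> - g \<omega> * indicator {x\<in>space M. X x \<le> lam x} \<omega> \<partial>M)"
    by (rule Bochner_Integration.integral_diff[OF intg intgi, symmetric])
  also have "\<dots> = (\<integral>\<omega>. al \<omega> / (1 - lam \<omega>) * (if lam \<omega> < X \<omega> then 1 else 0) \<partial>M)"
    by (rule Bochner_Integration.integral_cong) (auto simp: g_def indicator_def)
  finally show ?thesis .
qed



lemma conflict_sub: "conflict E L t \<subseteq> {1..t-1}"
  unfolding conflict_def by auto

lemma finite_conflict: "finite (conflict E L t)"
  using finite_subset[OF conflict_sub] by blast

lemma split_set: "1 \<le> t \<Longrightarrow> {1..t} = nonconf E L t \<union> (conflict E L t \<union> {t})"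
  using conflict_sub[of E L t] unfolding nonconf_def by fastforce

lemma split_disj: "nonconf E L t \<inter> (conflict E L t \<union> {t}) = {}"
  unfolding nonconf_def by auto

lemma nonconf_J: "nonconf E L t \<subseteq> {i\<in>{1..t}. E i \<le> t}"
  unfolding nonconf_def conflict_def by auto

lemma card_nonconf: "card (nonconf E L t) \<le> t - 1"
proof -
  have "card (nonconf E L t) \<le> card {1..t-1}" by (rule card_mono) (auto simp: nonconf_def)
  then show ?thesis by simp
qed

lemma Rej_01: "0 \<le> Rej P al j \<omega>" "Rej P al j \<omega> \<le> 1"
  by (auto simp: Rej_def)

lemma card_filter_sum: "finite I \<Longrightarrow> real (card {i\<in>I. Q i}) = (\<Sum>i\<in>I. if Q i then 1 else 0)"
  by (simp add: sum.inter_filter[symmetric])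

lemma card_rej: "real (card (rejset P al E t \<omega>)) = (\<Sum>i\<in>{i\<in>{1..t}. E i \<le> t}. Rej P al i \<omega>)"
proof -
  have fin: "finite {i\<in>{1..t}. E i \<le> t}" by simp
  have eq: "rejset P al E t \<omega> = {i\<in>{i\<in>{1..t}. E i \<le> t}. P i \<omega> \<le> al i \<omega>}"
    unfolding rejset_def by auto
  show ?thesis unfolding eq card_filter_sum[OF fin] Rej_def by (rule refl)
qed

lemma card_rejH: "real (card (rejset P al E t \<omega> \<inter> H0)) = (\<Sum>i\<in>{i\<in>{1..t}. E i \<le> t \<and> i \<in> H0}. Rej P al i \<omega>)"
proof -
  have fin: "finite {i\<in>{1..t}. E i \<le> t \<and> i \<in> H0}" by simp
  have eq: "rejset P al E t \<omega> \<inter> H0 = {i\<in>{i\<in>{1..t}. E i \<le> t \<and> i \<in> H0}. P i \<omega> \<le> al i \<omega>}"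
    unfolding rejset_def by auto
  show ?thesis unfolding eq card_filter_sum[OF fin] Rej_def by (rule refl)
qed

lemma S_nonneg: "0 \<le> (\<Sum>j\<in>nonconf E L t. Rej P al j \<omega>)"
  by (intro sum_nonneg) (simp add: Rej_01)

lemma S_le_card: "(\<Sum>j\<in>nonconf E L t. Rej P al j \<omega>) \<le> real (card (rejset P al E t \<omega>))"
  unfolding card_rej by (rule sum_mono2[OF _ nonconf_J]) (auto simp: Rej_01)

lemma S_le_t: "1 \<le> t \<Longrightarrow> max (\<Sum>j\<in>nonconf E L t. Rej P al j \<omega>) 1 \<le> real t"
proof -
  assume t: "1 \<le> t"
  have "(\<Sum>j\<in>nonconf E L t. Rej P al j \<omega>) \<le> (\<Sum>j\<in>nonconf E L t. 1)"
    by (rule sum_mono) (simp add: Rej_01)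
  also have "\<dots> = real (card (nonconf E L t))" by simp
  also have "\<dots> \<le> real t" using card_nonconf[of E L t] by simp
  finally show ?thesis using t by simp
qed

lemma card_rej_le: "real (card (rejset P al E t \<omega>)) \<le> real t"
proof -
  have "card (rejset P al E t \<omega>) \<le> card {1..t}"
    by (rule card_mono) (auto simp: rejset_def)
  then show ?thesis by simp
qed

lemma final:
  assumes PS: "prob_space M" and RM: "\<And>i. 1 \<le> i \<Longrightarrow> Rej P al i \<in> borel_measurable M"
    and num: "(\<integral>\<omega>. real (card (rejset P al E t \<omega> \<inter> H0)) \<partial>M) \<le> a * (\<integral>\<omega>. max (real (card (rejset P al E t \<omega>))) 1 \<partial>M)"
  shows "mFDR M H0 P al E t \<le> a"
proof -
  interpret prob_space M by fact
  have m: "(\<lambda>\<omega>. max (real (card (rejset P al E t \<omega>))) 1) \<in> borel_measurable M"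
    unfolding card_rej by (intro borel_measurable_max borel_measurable_sum RM) auto
  have int: "integrable M (\<lambda>\<omega>. max (real (card (rejset P al E t \<omega>))) 1)"
  proof (rule int_bdd[OF PS m, where B="real t + 1"])
    fix \<omega>
    have "real (card (rejset P al E t \<omega>)) \<le> real t" by (rule card_rej_le)
    then show "\<bar>max (real (card (rejset P al E t \<omega>))) 1\<bar> \<le> real t + 1" by linarith
  qed
  have "(\<integral>\<omega>. 1 \<partial>M) \<le> (\<integral>\<omega>. max (real (card (rejset P al E t \<omega>))) 1 \<partial>M)"
    by (rule integral_mono[OF _ int]) auto
  then have d: "1 \<le> (\<integral>\<omega>. max (real (card (rejset P al E t \<omega>))) 1 \<partial>M)" by (simp add: prob_space)
  show ?thesis unfolding mFDR_def using num d by (simp add: divide_le_eq)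
qed



lemma int_den:
  assumes PS: "prob_space M" and RM: "\<And>i. 1 \<le> i \<Longrightarrow> Rej P al i \<in> borel_measurable M"
  shows "integrable M (\<lambda>\<omega>. max (real (card (rejset P al E t \<omega>))) 1)"
proof -
  have m: "(\<lambda>\<omega>. max (real (card (rejset P al E t \<omega>))) 1) \<in> borel_measurable M"
    unfolding card_rej by (intro borel_measurable_max borel_measurable_sum RM) auto
  show ?thesis
  proof (rule int_bdd[OF PS m, where B="real t + 1"])
    fix \<omega>
    have "real (card (rejset P al E t \<omega>)) \<le> real t" by (rule card_rej_le)
    then show "\<bar>max (real (card (rejset P al E t \<omega>))) 1\<bar> \<le> real t + 1" by linarith
  qed
qed

lemma int_Rej:
  assumes PS: "prob_space M" and RM: "Rej P al i \<in> borel_measurable M"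
  shows "integrable M (Rej P al i)"
  by (rule int_bdd[OF PS RM, where B=1]) (simp add: Rej_def)

lemma lord_part:
  assumes PS: "prob_space M" and PM: "\<And>t. P t \<in> borel_measurable M"
    and Et: "\<And>t. t \<ge> 1 \<Longrightarrow> t \<le> E t" and Lm: "\<And>t. t \<ge> 1 \<Longrightarrow> L (Suc t) \<le> L t + 1"
    and LS: "is_LORD_star M a P al E L" and CS: "cond_superuniform M H0 P E (lord_filt M P al E L)"
    and t: "1 \<le> t"
  shows "mFDR M H0 P al E t \<le> a"
proof -
  interpret prob_space M by fact
  have LSs: "0 \<le> al s \<omega> \<and> (\<Sum>j=1..s. al j \<omega>) \<le> a * max (\<Sum>j\<in>nonconf E L s. Rej P al j \<omega>) 1"
    if "1 \<le> s" "\<omega> \<in> space M" for s \<omega>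
    using LS that unfolding is_LORD_star_def by blast
  have alM: "al s \<in> borel_measurable M" if "1 \<le> s" for s by (rule lord_meas[OF LS PM that])
  have RM: "Rej P al i \<in> borel_measurable M" if "1 \<le> i" for i by (rule Rej_meas[where P=P and i=i and al=al, OF PM[of i] alM[OF that]])
  obtain \<omega>0 where w0: "\<omega>0 \<in> space M" using not_empty by blast
  have a0: "0 \<le> a"
  proof -
    have "0 \<le> a * max (\<Sum>j\<in>nonconf E L 1. Rej P al j \<omega>0) 1" using LSs[OF _ w0, of 1] by simp
    moreover have "0 < max (\<Sum>j\<in>nonconf E L 1. Rej P al j \<omega>0) 1" by simp
    ultimately show ?thesis by (simp add: zero_le_mult_iff)
  qed
  have sum_le: "(\<Sum>j\<in>J. al j \<omega>) \<le> (\<Sum>j=1..s. al j \<omega>)" if "J \<subseteq> {1..s}" "\<omega> \<in> space M" for J s \<omega>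
    by (rule sum_mono2) (use that LSs in auto)
  have alb: "0 \<le> al i \<omega> \<and> al i \<omega> \<le> a * real i" if "1 \<le> i" "\<omega> \<in> space M" for i \<omega>
  proof -
    have "al i \<omega> = (\<Sum>j\<in>{i}. al j \<omega>)" by simp
    also have "\<dots> \<le> (\<Sum>j=1..i. al j \<omega>)" by (rule sum_le) (use that in auto)
    also have "\<dots> \<le> a * max (\<Sum>j\<in>nonconf E L i. Rej P al j \<omega>) 1" using LSs[OF that] by blast
    also have "\<dots> \<le> a * real i" by (rule mult_left_mono[OF S_le_t[OF that(1)] a0])
    finally show ?thesis using LSs[OF that] by blast
  qed
  define I where "I = {i\<in>{1..t}. E i \<le> t \<and> i \<in> H0}"
  have finI: "finite I" unfolding I_def by simp
  have intal: "integrable M (al i)" if "1 \<le> i" for i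
    by (rule int_bdd[OF PS alM[OF that], where B="a * real i"]) (use alb[OF that] in auto)
  have "(\<integral>\<omega>. real (card (rejset P al E t \<omega> \<inter> H0)) \<partial>M) = (\<integral>\<omega>. (\<Sum>i\<in>I. Rej P al i \<omega>) \<partial>M)"
    unfolding card_rejH I_def ..
  also have "\<dots> = (\<Sum>i\<in>I. (\<integral>\<omega>. Rej P al i \<omega> \<partial>M))"
    by (rule Bochner_Integration.integral_sum) (use int_Rej[OF PS RM] I_def in auto)
  also have "\<dots> \<le> (\<Sum>i\<in>I. (\<integral>\<omega>. al i \<omega> \<partial>M))"
  proof (rule sum_mono)
    fix i assume iI: "i \<in> I"
    then have i1: "1 \<le> i" and iH: "i \<in> H0" unfolding I_def by auto
    let ?F = "lord_filt M P al E L (E i)"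
    have SA: "subalgebra M ?F" by (rule lord_sub[OF LS PM])
    have sub2: "subalgebra ?F (lord_filt M P al E L i)" by (rule lord_filt_mono[where L=L and i=i and j="E i", OF Lm i1 Et[OF i1]])
    have "al i \<in> borel_measurable (lord_filt M P al E L i)" using LS i1 unfolding is_LORD_star_def by blast
    then have hF: "al i \<in> borel_measurable ?F" by (rule measurable_from_subalg[OF sub2])
    have SU: "AE \<omega> in M. real_cond_exp M ?F (indicator {x\<in>space M. P i x \<le> u}) \<omega> \<le> u" if "u \<in> {0..1}" for u
      using CS iH i1 that unfolding cond_superuniform_def by blast
    have "(\<integral>\<omega>. (if P i \<omega> \<le> al i \<omega> then 1 else 0::real) \<partial>M) \<le> (\<integral>\<omega>. al i \<omega> \<partial>M)"
      by (rule null_L[OF PS SA PM SU hF, where C="a * real i"]) (use alb[OF i1] in auto)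
    then show "(\<integral>\<omega>. Rej P al i \<omega> \<partial>M) \<le> (\<integral>\<omega>. al i \<omega> \<partial>M)" by (simp add: Rej_def)
  qed
  also have "\<dots> = (\<integral>\<omega>. (\<Sum>i\<in>I. al i \<omega>) \<partial>M)"
    by (rule Bochner_Integration.integral_sum[symmetric]) (use intal I_def in auto)
  also have "\<dots> \<le> (\<integral>\<omega>. a * max (real (card (rejset P al E t \<omega>))) 1 \<partial>M)"
  proof (rule integral_mono)
    show "integrable M (\<lambda>\<omega>. \<Sum>i\<in>I. al i \<omega>)"
      by (rule Bochner_Integration.integrable_sum) (use intal I_def in auto)
    show "integrable M (\<lambda>\<omega>. a * max (real (card (rejset P al E t \<omega>))) 1)"
      using int_den[OF PS RM] by simp
    fix \<omega> assume w: "\<omega> \<in> space M"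
    have "(\<Sum>i\<in>I. al i \<omega>) \<le> (\<Sum>j=1..t. al j \<omega>)" by (rule sum_le) (use w I_def in auto)
    also have "\<dots> \<le> a * max (\<Sum>j\<in>nonconf E L t. Rej P al j \<omega>) 1" using LSs[OF t w] by blast
    also have "\<dots> \<le> a * max (real (card (rejset P al E t \<omega>))) 1"
      by (rule mult_left_mono[OF _ a0]) (use S_le_card[where E=E and L=L and t=t and P=P and al=al and \<omega>=\<omega>] in auto)
    finally show "(\<Sum>i\<in>I. al i \<omega>) \<le> a * max (real (card (rejset P al E t \<omega>))) 1" .
  qed
  also have "\<dots> = a * (\<integral>\<omega>. max (real (card (rejset P al E t \<omega>))) 1 \<partial>M)"
    by (rule integral_mult_right_zero)
  finally show ?thesis by (intro final[where M=M and P=P and al=al, OF PS]) (use RM in auto)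
qed



lemma conf1: "j \<in> conflict E L s \<union> {s} \<Longrightarrow> 1 \<le> s \<Longrightarrow> 1 \<le> j"
  using conflict_sub[of E L s] by auto

lemma saff_part:
  assumes PS: "prob_space M" and PM: "\<And>t. P t \<in> borel_measurable M"
    and Et: "\<And>t. t \<ge> 1 \<Longrightarrow> t \<le> E t" and Lm: "\<And>t. t \<ge> 1 \<Longrightarrow> L (Suc t) \<le> L t + 1"
    and LS: "is_SAFFRON_star M a P al lam E L" and CS: "cond_superuniform M H0 P E (saffron_filt M P al lam E L)"
    and t: "1 \<le> t"
  shows "mFDR M H0 P al E t \<le> a"
proof -
  interpret prob_space M by fact
  define G where "G = (\<lambda>j \<omega>. al j \<omega> / (1 - lam j \<omega>) * (if P j \<omega> > lam j \<omega> then 1 else (0::real)))"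
  define A where "A = (\<lambda>s \<omega>. (\<Sum>j\<in>nonconf E L s. G j \<omega>))"
  define B where "B = (\<lambda>s \<omega>. (\<Sum>j\<in>conflict E L s \<union> {s}. al j \<omega> / (1 - lam j \<omega>)))"
  have LSs: "0 \<le> al s \<omega> \<and> al s \<omega> \<le> lam s \<omega> \<and> lam s \<omega> < 1 \<and> A s \<omega> + B s \<omega> \<le> a * max (\<Sum>j\<in>nonconf E L s. Rej P al j \<omega>) 1"
    if "1 \<le> s" "\<omega> \<in> space M" for s \<omega>
    using LS that unfolding is_SAFFRON_star_def A_def B_def G_def by blast
  have alM: "al s \<in> borel_measurable M" "lam s \<in> borel_measurable M" if "1 \<le> s" for s
    using saff_meas[OF LS PM that] by auto
  have RM: "Rej P al i \<in> borel_measurable M" if "1 \<le> i" for i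
    by (rule Rej_meas[where P=P and i=i and al=al, OF PM[of i] alM(1)[OF that]])
  have g0: "0 \<le> al j \<omega> / (1 - lam j \<omega>)" if "1 \<le> j" "\<omega> \<in> space M" for j \<omega>
    using LSs[OF that] by (intro divide_nonneg_pos) auto
  have G0: "0 \<le> G j \<omega>" if "1 \<le> j" "\<omega> \<in> space M" for j \<omega>
    unfolding G_def using g0[OF that] by auto
  have Gg: "G j \<omega> \<le> al j \<omega> / (1 - lam j \<omega>)" if "1 \<le> j" "\<omega> \<in> space M" for j \<omega>
    unfolding G_def using g0[OF that] by auto
  have A0: "0 \<le> A s \<omega>" if "\<omega> \<in> space M" for s \<omega>
    unfolding A_def by (rule sum_nonneg) (use G0 that in \<open>auto simp: nonconf_def\<close>)
  have B0: "0 \<le> B s \<omega>" if "1 \<le> s" "\<omega> \<in> space M" for s \<omega>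
    unfolding B_def by (rule sum_nonneg) (rule g0[OF conf1 that(2)], assumption, rule that(1))
  obtain \<omega>0 where w0: "\<omega>0 \<in> space M" using not_empty by blast
  have a0: "0 \<le> a"
  proof -
    have "0 \<le> a * max (\<Sum>j\<in>nonconf E L 1. Rej P al j \<omega>0) 1"
      using LSs[OF _ w0, of 1] A0[OF w0, of 1] B0[OF _ w0, of 1] by simp
    moreover have "0 < max (\<Sum>j\<in>nonconf E L 1. Rej P al j \<omega>0) 1" by simp
    ultimately show ?thesis by (simp add: zero_le_mult_iff)
  qed
  have gb: "al i \<omega> / (1 - lam i \<omega>) \<le> a * real i" if "1 \<le> i" "\<omega> \<in> space M" for i \<omega>
  proof -
    have "al i \<omega> / (1 - lam i \<omega>) \<le> B i \<omega>"
      unfolding B_def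
    proof (rule member_le_sum)
      fix j assume "j \<in> conflict E L i \<union> {i} - {i}"
      then have "1 \<le> j" using conf1[of j E L i] that(1) by blast
      then show "0 \<le> al j \<omega> / (1 - lam j \<omega>)" using g0 that(2) by blast
    qed (auto simp: finite_conflict)
    also have "\<dots> \<le> A i \<omega> + B i \<omega>" using A0[OF that(2)] by simp
    also have "\<dots> \<le> a * max (\<Sum>j\<in>nonconf E L i. Rej P al j \<omega>) 1" using LSs[OF that] by blast
    also have "\<dots> \<le> a * real i" by (rule mult_left_mono[OF S_le_t[OF that(1)] a0])
    finally show ?thesis .
  qed
  have GM: "G j \<in> borel_measurable M" if "1 \<le> j" for j
    using alM[OF that] PM[of j] unfolding G_def by measurable
  have intG: "integrable M (G j)" if "1 \<le> j" for j
  proof (rule int_bdd[OF PS GM[OF that], where B="a * real j"])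
    fix \<omega> assume w: "\<omega> \<in> space M"
    show "\<bar>G j \<omega>\<bar> \<le> a * real j" using G0[OF that w] Gg[OF that w] gb[OF that w] by simp
  qed
  define I where "I = {i\<in>{1..t}. E i \<le> t \<and> i \<in> H0}"
  have "(\<integral>\<omega>. real (card (rejset P al E t \<omega> \<inter> H0)) \<partial>M) = (\<integral>\<omega>. (\<Sum>i\<in>I. Rej P al i \<omega>) \<partial>M)"
    unfolding card_rejH I_def ..
  also have "\<dots> = (\<Sum>i\<in>I. (\<integral>\<omega>. Rej P al i \<omega> \<partial>M))"
    by (rule Bochner_Integration.integral_sum) (use int_Rej[OF PS RM] I_def in auto)
  also have "\<dots> \<le> (\<Sum>i\<in>I. (\<integral>\<omega>. G i \<omega> \<partial>M))"
  proof (rule sum_mono)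
    fix i assume iI: "i \<in> I"
    then have i1: "1 \<le> i" and iH: "i \<in> H0" unfolding I_def by auto
    let ?F = "saffron_filt M P al lam E L (E i)"
    have SA: "subalgebra M ?F" by (rule saff_sub[OF LS PM])
    have sub2: "subalgebra ?F (saffron_filt M P al lam E L i)"
      by (rule saff_filt_mono[where L=L and i=i and j="E i", OF Lm i1 Et[OF i1]])
    have "al i \<in> borel_measurable (saffron_filt M P al lam E L i)" "lam i \<in> borel_measurable (saffron_filt M P al lam E L i)"
      using LS i1 unfolding is_SAFFRON_star_def by blast+
    then have alF: "al i \<in> borel_measurable ?F" and lamF: "lam i \<in> borel_measurable ?F"
      using measurable_from_subalg[OF sub2] by blast+
    have SU: "AE \<omega> in M. real_cond_exp M ?F (indicator {x\<in>space M. P i x \<le> u}) \<omega> \<le> u" if "u \<in> {0..1}" for u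
      using CS iH i1 that unfolding cond_superuniform_def by blast
    have "(\<integral>\<omega>. (if P i \<omega> \<le> al i \<omega> then 1 else 0::real) \<partial>M)
       \<le> (\<integral>\<omega>. al i \<omega> / (1 - lam i \<omega>) * (if lam i \<omega> < P i \<omega> then 1 else 0) \<partial>M)"
      by (rule null_S[OF PS SA PM SU alF lamF, where B="a * real i"]) (use LSs[OF i1] gb[OF i1] in auto)
    then show "(\<integral>\<omega>. Rej P al i \<omega> \<partial>M) \<le> (\<integral>\<omega>. G i \<omega> \<partial>M)" by (simp add: Rej_def G_def)
  qed
  also have "\<dots> \<le> (\<Sum>i\<in>{1..t}. (\<integral>\<omega>. G i \<omega> \<partial>M))"
  proof (rule sum_mono2)
    show "I \<subseteq> {1..t}" unfolding I_def by auto
    fix b assume "b \<in> {1..t} - I"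
    then have "1 \<le> b" by auto
    then show "0 \<le> (\<integral>\<omega>. G b \<omega> \<partial>M)" using G0 by (intro Bochner_Integration.integral_nonneg) blast
  qed simp
  also have "\<dots> = (\<integral>\<omega>. (\<Sum>i\<in>{1..t}. G i \<omega>) \<partial>M)"
    by (rule Bochner_Integration.integral_sum[symmetric]) (use intG in auto)
  also have "\<dots> \<le> (\<integral>\<omega>. a * max (real (card (rejset P al E t \<omega>))) 1 \<partial>M)"
  proof (rule integral_mono)
    show "integrable M (\<lambda>\<omega>. \<Sum>i\<in>{1..t}. G i \<omega>)"
      by (rule Bochner_Integration.integrable_sum) (use intG in auto)
    show "integrable M (\<lambda>\<omega>. a * max (real (card (rejset P al E t \<omega>))) 1)"
      using int_den[OF PS RM] by simp
    fix \<omega> assume w: "\<omega> \<in> space M"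
    have "(\<Sum>i\<in>{1..t}. G i \<omega>) = A t \<omega> + (\<Sum>i\<in>conflict E L t \<union> {t}. G i \<omega>)"
    proof -
      have ss: "{1..t} = nonconf E L t \<union> (conflict E L t \<union> {t})" by (rule split_set[OF t])
      show ?thesis unfolding A_def ss
        by (rule sum.union_disjoint[OF finite_nonconf _ split_disj]) (simp add: finite_conflict)
    qed
    also have "\<dots> \<le> A t \<omega> + B t \<omega>"
      unfolding B_def
    proof (intro add_left_mono sum_mono)
      fix j assume "j \<in> conflict E L t \<union> {t}"
      then have "1 \<le> j" using conf1[of j E L t] t by blast
      then show "G j \<omega> \<le> al j \<omega> / (1 - lam j \<omega>)" using Gg w by blast
    qed
    also have "\<dots> \<le> a * max (\<Sum>j\<in>nonconf E L t. Rej P al j \<omega>) 1" using LSs[OF t w] by blast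
    also have "\<dots> \<le> a * max (real (card (rejset P al E t \<omega>))) 1"
      by (rule mult_left_mono[OF _ a0]) (use S_le_card[where E=E and L=L and t=t and P=P and al=al and \<omega>=\<omega>] in auto)
    finally show "(\<Sum>i\<in>{1..t}. G i \<omega>) \<le> a * max (real (card (rejset P al E t \<omega>))) 1" .
  qed
  also have "\<dots> = a * (\<integral>\<omega>. max (real (card (rejset P al E t \<omega>))) 1 \<partial>M)"
    by (rule integral_mult_right_zero)
  finally show ?thesis by (intro final[where M=M and P=P and al=al, OF PS]) (use RM in auto)
qed


theorem theorem1:
  fixes M :: "'a measure" and a :: real and H0 :: "nat set"
    and P :: "nat \<Rightarrow> 'a \<Rightarrow> real" and E L :: "nat \<Rightarrow> nat"
  assumes "prob_space M"
    and "\<And>t. P t \<in> borel_measurable M"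
    and "\<And>t. t \<ge> 1 \<Longrightarrow> t \<le> E t"
    and "\<And>t. t \<ge> 1 \<Longrightarrow> L (Suc t) \<le> L t + 1"
  shows "(\<forall>al. is_LORD_star M a P al E L
            \<and> cond_superuniform M H0 P E (lord_filt M P al E L)
            \<longrightarrow> (\<forall>t\<ge>1. mFDR M H0 P al E t \<le> a))
       \<and> (\<forall>al lam. is_SAFFRON_star M a P al lam E L
            \<and> cond_superuniform M H0 P E (saffron_filt M P al lam E L)
            \<longrightarrow> (\<forall>t\<ge>1. mFDR M H0 P al E t \<le> a))"
  using lord_part[where M=M and P=P and E=E and L=L and a=a, OF assms]
    saff_part[where M=M and P=P and E=E and L=L and a=a, OF assms] by blast

end
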